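(* Let $m$ and $n$ be positive integers and let $\alpha$ be a real number. Define \[ p_{m}(X) = \sum_{\nu=0}^{m} \binom{m-\alpha}{m-\nu}\binom{n+\alpha}{\nu} X^{\nu}, \qquad q_{n}(X) = \sum_{\nu=0}^{n} \binom{m-\alpha}{\nu}\binom{n+\alpha}{n-\nu} X^{\nu}. \] Given a complex number $x$, let $C$ denote the straight line segment from $1$ to $x$. If $0$ is not on $C$, then \[ x^{\alpha} q_{n}(x) - p_{m}(x) = \alpha \binom{m-\alpha}{m}\binom{n+\alpha}{n} \int_{C} (t-x)^{m}(1-t)^{n} t^{\alpha-m-1}\, dt. \]
   Context: For a real number $y$ and a nonnegative integer $k$, $\binom{y}{k} = y(y-1)\cdots(y-k+1)/k!$. Complex powers $x^{\alpha}$ and $t^{\alpha-m-1}$ are taken with the principal branch of the logarithm (which is continuous along $C$ when $0 \notin C$). *)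

theory Defs
  imports "HOL-Complex_Analysis.Complex_Analysis"
begin

definition p_poly :: "nat \<Rightarrow> nat \<Rightarrow> real \<Rightarrow> complex \<Rightarrow> complex" where
  "p_poly m n \<alpha> X = (\<Sum>\<nu>=0..m. complex_of_real
      (((real m - \<alpha>) gchoose (m - \<nu>)) * ((real n + \<alpha>) gchoose \<nu>)) * X ^ \<nu>)"

definition q_poly :: "nat \<Rightarrow> nat \<Rightarrow> real \<Rightarrow> complex \<Rightarrow> complex" where
  "q_poly m n \<alpha> X = (\<Sum>\<nu>=0..n. complex_of_real
      (((real m - \<alpha>) gchoose \<nu>) * ((real n + \<alpha>) gchoose (n - \<nu>))) * X ^ \<nu>)"

end

theory Submission
  imports Defs
begin

definition SS :: "complex set" where "SS = - \<real>\<^sub>\<le>\<^sub>0"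

lemma seg_iff: "0 \<notin> closed_segment 1 x \<longleftrightarrow> x \<notin> \<real>\<^sub>\<le>\<^sub>0" for x :: complex
proof
  assume h: "0 \<notin> closed_segment 1 x"
  show "x \<notin> \<real>\<^sub>\<le>\<^sub>0"
  proof
    assume "x \<in> \<real>\<^sub>\<le>\<^sub>0"
    then obtain r where r: "x = of_real r" "r \<le> 0" by (auto elim: nonpos_Reals_cases)
    define u where "u = 1 / (1 - r)"
    have u: "0 \<le> u" "u \<le> 1" using r by (auto simp: u_def field_simps)
    have "(1 - u) *\<^sub>R 1 + u *\<^sub>R x = 0"
      using r by (simp add: u_def scaleR_conv_of_real field_simps)
    then have "0 \<in> closed_segment 1 x" using u unfolding closed_segment_def by force
    with h show False by simp
  qed
next
  assume h: "x \<notin> \<real>\<^sub>\<le>\<^sub>0"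
  show "0 \<notin> closed_segment 1 x"
  proof
    assume "0 \<in> closed_segment 1 x"
    then obtain u :: real where u: "0 \<le> u" "u \<le> 1" "(1 - u) *\<^sub>R 1 + u *\<^sub>R x = 0"
      unfolding closed_segment_def by force
    have "u \<noteq> 0" using u by auto
    then have "x = of_real (-(1-u)/u)" using u(3)
      by (simp add: scaleR_conv_of_real field_simps)
    moreover have "-(1-u)/u \<le> 0" using u by (simp add: divide_nonpos_nonneg)
    ultimately show False using h by (metis nonpos_Reals_of_real_iff)
  qed
qed

lemma open_SS: "open SS" unfolding SS_def by (simp add: open_Compl)

lemma SS_eq: "SS = -(complex_of_real ` {..0})"
  unfolding SS_def nonpos_Reals_def by auto

lemma starlike_SS: "starlike SS" unfolding SS_eq by (rule starlike_slotted_complex_plane_left)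

lemma connected_SS: "connected SS" by (rule starlike_imp_connected[OF starlike_SS])

lemma seg_SS: assumes "x \<in> SS" shows "closed_segment 1 x \<subseteq> SS"
proof
  fix y assume y: "y \<in> closed_segment 1 x"
  have "closed_segment 1 y \<subseteq> closed_segment 1 x"
    by (rule closed_segment_subset) (use y in auto)
  moreover have "0 \<notin> closed_segment 1 x" using assms seg_iff unfolding SS_def by auto
  ultimately have "0 \<notin> closed_segment 1 y" by auto
  then show "y \<in> SS" using seg_iff unfolding SS_def by auto
qed

lemma one_SS: "1 \<in> SS" unfolding SS_def by simp


lemma powr_holo: "(\<lambda>t. t powr c) holomorphic_on SS"
  by (rule holomorphic_on_powr) (auto intro: holomorphic_intros simp: SS_def)

lemma prim:
  assumes f: "f holomorphic_on SS" and x: "x \<in> SS"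
  shows "((\<lambda>y. contour_integral (linepath 1 y) f) has_field_derivative f x) (at x)"
proof -
  obtain g where g: "\<And>z. z \<in> SS \<Longrightarrow> (g has_field_derivative f z) (at z)"
    using holomorphic_starlike_primitive[OF holomorphic_on_imp_continuous_on[OF f] starlike_SS open_SS finite.emptyI]
      holomorphic_on_imp_differentiable_at[OF f open_SS] by blast
  have eq: "contour_integral (linepath 1 y) f = g y - g 1" if y: "y \<in> SS" for y
  proof -
    have "(f has_contour_integral (g (pathfinish (linepath 1 y)) - g (pathstart (linepath 1 y)))) (linepath 1 y)"
      by (rule contour_integral_primitive[of SS]) (use g seg_SS[OF y] in \<open>auto intro: has_field_derivative_at_within\<close>)
    then show ?thesis by (simp add: contour_integral_unique)
  qed
  have "((\<lambda>y. g y - g 1) has_field_derivative f x) (at x)"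
    using g[OF x] by (auto intro!: derivative_eq_intros)
  then show ?thesis
    by (rule has_field_derivative_transform_within_open[OF _ open_SS x]) (simp add: eq)
qed

definition hh :: "nat \<Rightarrow> complex \<Rightarrow> complex \<Rightarrow> complex" where
  "hh n \<beta> t = (1 - t)^n * t powr \<beta>"

definition Phi :: "nat \<Rightarrow> complex \<Rightarrow> nat \<Rightarrow> complex \<Rightarrow> complex" where
  "Phi n \<beta> k y = contour_integral (linepath 1 y) (\<lambda>t. t^k * hh n \<beta> t)"

definition Ig :: "nat \<Rightarrow> nat \<Rightarrow> complex \<Rightarrow> complex \<Rightarrow> complex" where
  "Ig m n \<beta> x = contour_integral (linepath 1 x) (\<lambda>t. (t - x)^m * (1 - t)^n * t powr \<beta>)"

lemma hh_holo: "hh n \<beta> holomorphic_on SS"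
  unfolding hh_def by (intro holomorphic_intros powr_holo)

lemma dPhi: "y \<in> SS \<Longrightarrow> (Phi n \<beta> k has_field_derivative y^k * hh n \<beta> y) (at y)"
  unfolding Phi_def[abs_def]
  by (rule prim[where f="\<lambda>t. t^k * hh n \<beta> t"]) (intro holomorphic_intros hh_holo)

lemma Ig_expand:
  assumes y: "y \<in> SS"
  shows "Ig m n \<beta> y = (\<Sum>k\<le>m. of_nat (m choose k) * (-y)^(m-k) * Phi n \<beta> k y)"
proof -
  have "Ig m n \<beta> y = contour_integral (linepath 1 y)
          (\<lambda>t. \<Sum>k\<le>m. (of_nat (m choose k) * (-y)^(m-k)) * (t^k * hh n \<beta> t))"
    unfolding Ig_def
    by (rule arg_cong[where f="contour_integral _"], rule ext)
       (simp add: hh_def binomial_ring[of _ "-y", simplified] sum_distrib_left sum_distrib_right mult_ac)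
  also have "\<dots> = (\<Sum>k\<le>m. contour_integral (linepath 1 y) (\<lambda>t. (of_nat (m choose k) * (-y)^(m-k)) * (t^k * hh n \<beta> t)))"
  proof (rule contour_integral_sum)
    fix k assume "k \<in> {..m}"
    have "continuous_on (closed_segment 1 y) (\<lambda>t. (of_nat (m choose k) * (-y)^(m-k)) * (t^k * hh n \<beta> t))"
      by (rule holomorphic_on_imp_continuous_on, rule holomorphic_on_subset[OF _ seg_SS[OF y]])
         (intro holomorphic_intros hh_holo)
    then show "(\<lambda>t. (of_nat (m choose k) * (-y)^(m-k)) * (t^k * hh n \<beta> t)) contour_integrable_on linepath 1 y"
      by (rule contour_integrable_continuous_linepath)
  qed simp
  also have "\<dots> = (\<Sum>k\<le>m. of_nat (m choose k) * (-y)^(m-k) * Phi n \<beta> k y)"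
  proof (rule sum.cong[OF refl])
    fix k assume "k \<in> {..m}"
    have "continuous_on (closed_segment 1 y) (\<lambda>t. (t^k * hh n \<beta> t))"
      by (rule holomorphic_on_imp_continuous_on, rule holomorphic_on_subset[OF _ seg_SS[OF y]])
         (intro holomorphic_intros hh_holo)
    then show "contour_integral (linepath 1 y) (\<lambda>t. (of_nat (m choose k) * (-y)^(m-k)) * (t^k * hh n \<beta> t)) = of_nat (m choose k) * (-y)^(m-k) * Phi n \<beta> k y"
      unfolding Phi_def by (simp add: contour_integral_lmul contour_integrable_continuous_linepath)
  qed
  finally show ?thesis .
qed


lemma dIg0: "x \<in> SS \<Longrightarrow> (Ig 0 n \<beta> has_field_derivative hh n \<beta> x) (at x)"
proof -
  assume x: "x \<in> SS"
  have "Ig 0 n \<beta> = Phi n \<beta> 0" by (auto simp: Ig_def Phi_def hh_def fun_eq_iff)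
  then show ?thesis using dPhi[OF x, of n \<beta> 0] by simp
qed

lemma dIg:
  assumes x: "x \<in> SS"
  shows "(Ig (Suc m) n \<beta> has_field_derivative (- of_nat (Suc m) * Ig m n \<beta> x)) (at x)"
proof -
  let ?G = "\<lambda>x. (\<Sum>k\<le>Suc m. of_nat (Suc m choose k) * (-x)^(Suc m-k) * Phi n \<beta> k x)"
  let ?A = "\<lambda>k. of_nat (Suc m choose k) * (-(of_nat (Suc m - k) * (-x)^(Suc m - k - 1))) * Phi n \<beta> k x"
  let ?B = "\<lambda>k. of_nat (Suc m choose k) * (-x)^(Suc m - k) * (x^k * hh n \<beta> x)"
  have d: "(?G has_field_derivative (\<Sum>k\<le>Suc m. ?A k + ?B k)) (at x)"
  proof (rule DERIV_sum)
    fix k assume "k \<in> {..Suc m}"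
    show "((\<lambda>x. of_nat (Suc m choose k) * (-x)^(Suc m-k) * Phi n \<beta> k x) has_field_derivative ?A k + ?B k) (at x)"
      by (rule derivative_eq_intros dPhi[OF x] refl | simp)+
  qed
  have B0: "(\<Sum>k\<le>Suc m. ?B k) = 0"
  proof -
    have "(\<Sum>k\<le>Suc m. ?B k) = (\<Sum>k\<le>Suc m. of_nat (Suc m choose k) * x^k * (-x)^(Suc m - k)) * hh n \<beta> x"
      unfolding sum_distrib_right by (rule sum.cong[OF refl]) (simp add: mult_ac)
    also have "\<dots> = (x + -x)^(Suc m) * hh n \<beta> x" by (simp only: binomial_ring)
    finally show ?thesis by simp
  qed
  have A: "(\<Sum>k\<le>Suc m. ?A k) = - of_nat (Suc m) * Ig m n \<beta> x"
  proof -
    have "(\<Sum>k\<le>Suc m. ?A k) = (\<Sum>k\<le>m. ?A k)" by simp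
    also have "\<dots> = (\<Sum>k\<le>m. - of_nat (Suc m) * (of_nat (m choose k) * (-x)^(m-k) * Phi n \<beta> k x))"
    proof (rule sum.cong[OF refl])
      fix k assume k: "k \<in> {..m}"
      then have e: "Suc m - k - 1 = m - k" by simp
      have "of_nat (Suc m choose k) * of_nat (Suc m - k) = (of_nat (Suc m * (m choose k)) :: complex)"
        using binomial_absorb_comp[of "Suc m" k] by (metis of_nat_mult diff_Suc_1 mult.commute)
      note eq = this
      have "?A k = - (of_nat (Suc m choose k) * of_nat (Suc m - k)) * ((-x)^(m-k) * Phi n \<beta> k x)"
        unfolding e by (simp add: mult_ac)
      also have "\<dots> = - of_nat (Suc m * (m choose k)) * ((-x)^(m-k) * Phi n \<beta> k x)"
        by (simp only: eq)
      also have "\<dots> = - of_nat (Suc m) * (of_nat (m choose k) * (-x)^(m-k) * Phi n \<beta> k x)"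
        by (simp only: of_nat_mult mult_ac minus_mult_left)
      finally show "?A k = - of_nat (Suc m) * (of_nat (m choose k) * (-x)^(m-k) * Phi n \<beta> k x)" .
    qed
    also have "\<dots> = - of_nat (Suc m) * Ig m n \<beta> x"
      by (simp add: Ig_expand[OF x] sum_distrib_left)
    finally show ?thesis .
  qed
  have "(?G has_field_derivative (- of_nat (Suc m) * Ig m n \<beta> x)) (at x)"
    using d unfolding sum.distrib B0 A by simp
  then show ?thesis
    by (rule has_field_derivative_transform_within_open[OF _ open_SS x]) (simp add: Ig_expand)
qed


lemma powr_split: "x \<noteq> 0 \<Longrightarrow> x powr a = x powr (a - 1) * (x::complex)"
  by (simp add: powr_def exp_diff field_simps)

lemma x_pow_pred: "x * (of_nat \<nu> * x ^ (\<nu> - 1)) = of_nat \<nu> * (x::complex) ^ \<nu>"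
  by (cases \<nu>) auto

lemma dpoly:
  "((\<lambda>x. \<Sum>\<nu>=0..N. complex_of_real (c \<nu>) * x ^ \<nu>) has_field_derivative
     (\<Sum>\<nu>=0..N. complex_of_real (c \<nu>) * (of_nat \<nu> * x ^ (\<nu> - 1)))) (at x)"
  by (rule DERIV_sum) (auto intro!: derivative_eq_intros)

lemma dL:
  fixes \<alpha> :: real
  assumes x: "x \<in> SS"
  shows "((\<lambda>x. x powr (of_real \<alpha>) * q_poly m n \<alpha> x - p_poly m n \<alpha> x) has_field_derivative
    (x powr (of_real \<alpha> - 1) * (\<Sum>\<nu>=0..n. complex_of_real ((\<alpha> + real \<nu>) * (((real m - \<alpha>) gchoose \<nu>) * ((real n + \<alpha>) gchoose (n-\<nu>)))) * x^\<nu>)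
     - (\<Sum>\<nu>=0..m. complex_of_real (((real m - \<alpha>) gchoose (m-\<nu>)) * ((real n + \<alpha>) gchoose \<nu>)) * (of_nat \<nu> * x^(\<nu>-1))))) (at x)"
proof -
  let ?cq = "\<lambda>\<nu>. ((real m - \<alpha>) gchoose \<nu>) * ((real n + \<alpha>) gchoose (n-\<nu>))"
  let ?cp = "\<lambda>\<nu>. ((real m - \<alpha>) gchoose (m-\<nu>)) * ((real n + \<alpha>) gchoose \<nu>)"
  have x0: "x \<notin> \<real>\<^sub>\<le>\<^sub>0" "x \<noteq> 0" using x by (auto simp: SS_def)
  have dq: "(q_poly m n \<alpha> has_field_derivative (\<Sum>\<nu>=0..n. complex_of_real (?cq \<nu>) * (of_nat \<nu> * x ^ (\<nu> - 1)))) (at x)"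
    unfolding q_poly_def[abs_def] by (rule dpoly)
  have dp: "(p_poly m n \<alpha> has_field_derivative (\<Sum>\<nu>=0..m. complex_of_real (?cp \<nu>) * (of_nat \<nu> * x ^ (\<nu> - 1)))) (at x)"
    unfolding p_poly_def[abs_def] by (rule dpoly)
  have d: "((\<lambda>x. x powr (of_real \<alpha>) * q_poly m n \<alpha> x - p_poly m n \<alpha> x) has_field_derivative
     (of_real \<alpha> * x powr (of_real \<alpha> - 1) * q_poly m n \<alpha> x + x powr (of_real \<alpha>) * (\<Sum>\<nu>=0..n. complex_of_real (?cq \<nu>) * (of_nat \<nu> * x ^ (\<nu> - 1)))
       - (\<Sum>\<nu>=0..m. complex_of_real (?cp \<nu>) * (of_nat \<nu> * x ^ (\<nu> - 1))))) (at x)"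
    using DERIV_diff[OF DERIV_mult[OF has_field_derivative_powr[OF x0(1), of "of_real \<alpha>"] dq] dp]
    by (simp add: mult_ac)
  have "of_real \<alpha> * x powr (of_real \<alpha> - 1) * q_poly m n \<alpha> x + x powr (of_real \<alpha>) * (\<Sum>\<nu>=0..n. complex_of_real (?cq \<nu>) * (of_nat \<nu> * x ^ (\<nu> - 1)))
     = x powr (of_real \<alpha> - 1) * (of_real \<alpha> * q_poly m n \<alpha> x + (\<Sum>\<nu>=0..n. complex_of_real (?cq \<nu>) * (x * (of_nat \<nu> * x ^ (\<nu> - 1)))))"
    by (subst powr_split[OF x0(2)]) (simp add: algebra_simps sum_distrib_left)
  also have "\<dots> = x powr (of_real \<alpha> - 1) * (\<Sum>\<nu>=0..n. complex_of_real ((\<alpha> + real \<nu>) * ?cq \<nu>) * x^\<nu>)"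
    unfolding x_pow_pred q_poly_def by (simp add: sum_distrib_left algebra_simps flip: sum.distrib)
  finally show ?thesis using d by simp
qed


lemma G5: "\<nu> \<le> n \<Longrightarrow> (\<alpha> + real \<nu>) * ((real n + \<alpha>) gchoose (n - \<nu>)) = (real n + \<alpha>) * ((real n + \<alpha> - 1) gchoose (n - \<nu>))"
  using gbinomial_absorb_comp[of "real n + \<alpha>" "n - \<nu>"] by (simp add: of_nat_diff)

lemma G4: "\<alpha> * ((real n + \<alpha>) gchoose n) = (real n + \<alpha>) * ((real n + \<alpha> - 1) gchoose n)"
  using gbinomial_absorb_comp[of "real n + \<alpha>" n] by simp

lemma G1: "real (Suc \<mu>) * (y gchoose Suc \<mu>) = y * ((y - 1) gchoose \<mu>)"
  using gbinomial_absorption[of \<mu> y] by simp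

lemma G3: "(\<alpha> - 1) * ((real m - (\<alpha> - 1)) gchoose m) = - real (Suc m) * ((real (Suc m) - \<alpha>) gchoose (Suc m))"
proof -
  let ?b = "real (Suc m) - \<alpha>"
  have a: "real (Suc m) * (?b gchoose Suc m) = ?b * ((?b - 1) gchoose m)" by (rule G1)
  have b: "(?b - real m) * (?b gchoose m) = ?b * ((?b - 1) gchoose m)"
    using gbinomial_absorb_comp[of ?b m] by simp
  have c: "real m - (\<alpha> - 1) = ?b" by simp
  show ?thesis unfolding c using a b by (simp add: algebra_simps)
qed

lemma Cb: assumes "\<nu> \<le> n"
  shows "(\<alpha> + real \<nu>) * (((- \<alpha>) gchoose \<nu>) * ((real n + \<alpha>) gchoose (n - \<nu>)))
       = \<alpha> * ((real n + \<alpha>) gchoose n) * (real (n choose \<nu>) * (-1)^\<nu>)"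
proof -
  let ?y = "real n + \<alpha> - 1"
  have tri: "(?y gchoose n) * (real n gchoose (n - \<nu>)) = (?y gchoose (n - \<nu>)) * ((?y - real (n - \<nu>)) gchoose (n - (n - \<nu>)))"
    using gbinomial_trinomial_revision[of "n - \<nu>" n ?y] by simp
  have e1: "n - (n - \<nu>) = \<nu>" using assms by simp
  have e2: "?y - real (n - \<nu>) = \<alpha> + real \<nu> - 1" using assms by (simp add: of_nat_diff)
  have e3: "(real n gchoose (n - \<nu>)) = real (n choose \<nu>)"
    using gbinomial_of_nat_symmetric[of "n - \<nu>" n] assms by (simp add: binomial_gbinomial)
  have mi: "((- \<alpha>) gchoose \<nu>) = (-1)^\<nu> * ((\<alpha> + real \<nu> - 1) gchoose \<nu>)"
    by (rule gbinomial_minus)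
  have "(\<alpha> + real \<nu>) * (((- \<alpha>) gchoose \<nu>) * ((real n + \<alpha>) gchoose (n - \<nu>)))
      = (real n + \<alpha>) * (-1)^\<nu> * (((\<alpha> + real \<nu> - 1) gchoose \<nu>) * (?y gchoose (n - \<nu>)))"
  proof -
    have "(\<alpha> + real \<nu>) * (((- \<alpha>) gchoose \<nu>) * ((real n + \<alpha>) gchoose (n - \<nu>)))
       = (-1)^\<nu> * ((\<alpha> + real \<nu> - 1) gchoose \<nu>) * ((\<alpha> + real \<nu>) * ((real n + \<alpha>) gchoose (n - \<nu>)))"
      unfolding mi by (simp only: ac_simps)
    also have "\<dots> = (-1)^\<nu> * ((\<alpha> + real \<nu> - 1) gchoose \<nu>) * ((real n + \<alpha>) * (?y gchoose (n - \<nu>)))"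
      by (simp only: G5[OF assms])
    finally show ?thesis by (simp only: ac_simps)
  qed
  also have "\<dots> = (real n + \<alpha>) * (-1)^\<nu> * ((?y gchoose n) * real (n choose \<nu>))"
    using tri unfolding e1 e2 e3 by (simp add: mult_ac)
  also have "\<dots> = \<alpha> * ((real n + \<alpha>) gchoose n) * (real (n choose \<nu>) * (-1)^\<nu>)"
    using G4[of \<alpha> n] by (simp add: algebra_simps)
  finally show ?thesis .
qed

lemma vdm: "q_poly m n \<alpha> 1 = p_poly m n \<alpha> 1"
proof -
  have q: "(\<Sum>\<nu>=0..n. ((real m - \<alpha>) gchoose \<nu>) * ((real n + \<alpha>) gchoose (n - \<nu>))) = real (m+n) gchoose n"
    using gbinomial_Vandermonde[of "real m - \<alpha>" "real n + \<alpha>" n] by (simp add: add.commute)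
  have p: "(\<Sum>\<nu>=0..m. ((real m - \<alpha>) gchoose (m - \<nu>)) * ((real n + \<alpha>) gchoose \<nu>)) = real (m+n) gchoose m"
    using gbinomial_Vandermonde[of "real n + \<alpha>" "real m - \<alpha>" m] by (simp add: mult.commute add.commute)
  have s: "real (m+n) gchoose n = real (m+n) gchoose m"
    using gbinomial_of_nat_symmetric[of m "m+n", where 'a=real] by simp
  show ?thesis unfolding q_poly_def p_poly_def
    using arg_cong[OF q, of complex_of_real] arg_cong[OF p, of complex_of_real] s
    by (simp add: of_real_sum)
qed


lemma const_from_deriv:
  assumes d: "\<And>y. y \<in> SS \<Longrightarrow> (F has_field_derivative 0) (at y)" and F1: "F 1 = 0" and x: "x \<in> SS"
  shows "F x = 0"
proof -
  have "continuous_on SS F"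
    by (rule DERIV_continuous_on) (use d in \<open>blast intro: has_field_derivative_at_within\<close>)
  then obtain c where c: "\<And>y. y \<in> SS \<Longrightarrow> F y = c"
    using DERIV_zero_connected_constant[OF connected_SS open_SS finite.emptyI, of F] d by blast
  show ?thesis using c[OF x] c[OF one_SS] F1 by simp
qed

lemma main:
  assumes "x \<in> SS"
  shows "x powr (complex_of_real \<alpha>) * q_poly m n \<alpha> x - p_poly m n \<alpha> x =
    complex_of_real (\<alpha> * ((real m - \<alpha>) gchoose m) * ((real n + \<alpha>) gchoose n)) *
    Ig m n (complex_of_real \<alpha> - of_nat m - 1) x"
  using assms
proof (induction m arbitrary: \<alpha> x)
  case 0
  let ?K = "\<alpha> * ((real 0 - \<alpha>) gchoose 0) * ((real n + \<alpha>) gchoose n)"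
  let ?\<beta> = "complex_of_real \<alpha> - of_nat 0 - 1"
  let ?F = "\<lambda>x. x powr (complex_of_real \<alpha>) * q_poly 0 n \<alpha> x - p_poly 0 n \<alpha> x - complex_of_real ?K * Ig 0 n ?\<beta> x"
  have "?F x = 0"
  proof (rule const_from_deriv[OF _ _ "0.prems"])
    fix y assume y: "y \<in> SS"
    have s: "(\<Sum>\<nu>=0..n. complex_of_real ((\<alpha> + real \<nu>) * (((real 0 - \<alpha>) gchoose \<nu>) * ((real n + \<alpha>) gchoose (n-\<nu>)))) * y^\<nu>)
        = complex_of_real ?K * (1 - y)^n"
    proof -
      have "(\<Sum>\<nu>=0..n. complex_of_real ((\<alpha> + real \<nu>) * (((real 0 - \<alpha>) gchoose \<nu>) * ((real n + \<alpha>) gchoose (n-\<nu>)))) * y^\<nu>)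
          = (\<Sum>\<nu>=0..n. complex_of_real ?K * (of_nat (n choose \<nu>) * (-y)^\<nu>))"
      proof (rule sum.cong[OF refl])
        fix \<nu> assume "\<nu> \<in> {0..n}"
        then have "\<nu> \<le> n" by simp
        have e: "real 0 - \<alpha> = - \<alpha>" by simp
        have "complex_of_real ((\<alpha> + real \<nu>) * (((real 0 - \<alpha>) gchoose \<nu>) * ((real n + \<alpha>) gchoose (n-\<nu>)))) * y^\<nu>
           = complex_of_real (\<alpha> * ((real n + \<alpha>) gchoose n) * (real (n choose \<nu>) * (-1)^\<nu>)) * y^\<nu>"
          unfolding e Cb[OF \<open>\<nu> \<le> n\<close>] ..
        also have "\<dots> = complex_of_real ?K * (of_nat (n choose \<nu>) * ((-1)^\<nu> * y^\<nu>))"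
          by (simp only: of_real_mult of_real_power of_real_minus of_real_1 of_real_of_nat_eq gbinomial_0 mult_1_right mult.assoc)
        also have "\<dots> = complex_of_real ?K * (of_nat (n choose \<nu>) * (-y)^\<nu>)"
          by (simp only: power_minus[of y \<nu>])
        finally show "complex_of_real ((\<alpha> + real \<nu>) * (((real 0 - \<alpha>) gchoose \<nu>) * ((real n + \<alpha>) gchoose (n-\<nu>)))) * y^\<nu>
           = complex_of_real ?K * (of_nat (n choose \<nu>) * (-y)^\<nu>)" .
      qed
      also have "\<dots> = complex_of_real ?K * (\<Sum>\<nu>\<le>n. of_nat (n choose \<nu>) * (-y)^\<nu>)"
        by (simp only: sum_distrib_left atLeast0AtMost)
      also have "(\<Sum>\<nu>\<le>n. of_nat (n choose \<nu>) * (-y)^\<nu>) = (-y + 1)^n"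
        using binomial_ring[of "-y" 1 n] by simp
      finally show ?thesis by simp
    qed
    have "(?F has_field_derivative
        (y powr (complex_of_real \<alpha> - 1) * (complex_of_real ?K * (1 - y)^n) - 0) - complex_of_real ?K * hh n ?\<beta> y) (at y)"
      using DERIV_diff[OF dL[OF y, of \<alpha> 0 n] DERIV_cmult[OF dIg0[OF y], of "complex_of_real ?K"]]
    proof (rule DERIV_cong)
      have z: "(\<Sum>\<nu>=0..0. complex_of_real (((real 0 - \<alpha>) gchoose (0-\<nu>)) * ((real n + \<alpha>) gchoose \<nu>)) * (of_nat \<nu> * y^(\<nu>-1))) = 0"
        by simp
      show "y powr (complex_of_real \<alpha> - 1) * (\<Sum>\<nu>=0..n. complex_of_real ((\<alpha> + real \<nu>) * (((real 0 - \<alpha>) gchoose \<nu>) * ((real n + \<alpha>) gchoose (n-\<nu>)))) * y^\<nu>)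
     - (\<Sum>\<nu>=0..0. complex_of_real (((real 0 - \<alpha>) gchoose (0-\<nu>)) * ((real n + \<alpha>) gchoose \<nu>)) * (of_nat \<nu> * y^(\<nu>-1))) - complex_of_real ?K * hh n ?\<beta> y
       = (y powr (complex_of_real \<alpha> - 1) * (complex_of_real ?K * (1 - y)^n) - 0) - complex_of_real ?K * hh n ?\<beta> y"
        unfolding s z ..
    qed
    then show "(?F has_field_derivative 0) (at y)"
      by (rule DERIV_cong) (simp add: hh_def mult_ac)
  next
    show "?F 1 = 0" using vdm[of 0 n \<alpha>] by (simp add: Ig_def)
  qed
  then show ?case by simp
next
  case (Suc m)
  let ?K = "\<alpha> * ((real (Suc m) - \<alpha>) gchoose (Suc m)) * ((real n + \<alpha>) gchoose n)"
  let ?K' = "(\<alpha> - 1) * ((real m - (\<alpha> - 1)) gchoose m) * ((real n + (\<alpha> - 1)) gchoose n)"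
  let ?\<beta> = "complex_of_real \<alpha> - of_nat (Suc m) - 1"
  let ?F = "\<lambda>x. x powr (complex_of_real \<alpha>) * q_poly (Suc m) n \<alpha> x - p_poly (Suc m) n \<alpha> x - complex_of_real ?K * Ig (Suc m) n ?\<beta> x"
  have e1: "real m - (\<alpha> - 1) = real (Suc m) - \<alpha>" by simp
  have e2: "real n + (\<alpha> - 1) = real n + \<alpha> - 1" by simp
  have eb: "complex_of_real (\<alpha> - 1) - of_nat m - 1 = ?\<beta>" by simp
  have KK: "(real n + \<alpha>) * ?K' = - real (Suc m) * ?K"
  proof -
    have "(real n + \<alpha>) * ?K' = ((\<alpha> - 1) * ((real m - (\<alpha> - 1)) gchoose m)) * ((real n + \<alpha>) * ((real n + \<alpha> - 1) gchoose n))"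
      unfolding e2 by (simp only: ac_simps)
    also have "\<dots> = (- real (Suc m) * ((real (Suc m) - \<alpha>) gchoose (Suc m))) * (\<alpha> * ((real n + \<alpha>) gchoose n))"
      by (simp only: G3 G4)
    also have "\<dots> = - real (Suc m) * ?K" by (simp only: ac_simps)
    finally show ?thesis .
  qed
  have "?F x = 0"
  proof (rule const_from_deriv[OF _ _ Suc.prems])
    fix y assume y: "y \<in> SS"
    have S1: "(\<Sum>\<nu>=0..n. complex_of_real ((\<alpha> + real \<nu>) * (((real (Suc m) - \<alpha>) gchoose \<nu>) * ((real n + \<alpha>) gchoose (n-\<nu>)))) * y^\<nu>)
        = complex_of_real (real n + \<alpha>) * q_poly m n (\<alpha> - 1) y"
      unfolding q_poly_def sum_distrib_left
    proof (rule sum.cong[OF refl])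
      fix \<nu> assume "\<nu> \<in> {0..n}"
      then have nu: "\<nu> \<le> n" by simp
      have "(\<alpha> + real \<nu>) * (((real (Suc m) - \<alpha>) gchoose \<nu>) * ((real n + \<alpha>) gchoose (n-\<nu>)))
          = (real n + \<alpha>) * (((real m - (\<alpha> - 1)) gchoose \<nu>) * ((real n + (\<alpha> - 1)) gchoose (n - \<nu>)))"
        unfolding e1 e2 using G5[OF nu, of \<alpha>] by (metis mult.left_commute)
      then show "complex_of_real ((\<alpha> + real \<nu>) * (((real (Suc m) - \<alpha>) gchoose \<nu>) * ((real n + \<alpha>) gchoose (n-\<nu>)))) * y^\<nu>
          = complex_of_real (real n + \<alpha>) * (complex_of_real (((real m - (\<alpha> - 1)) gchoose \<nu>) * ((real n + (\<alpha> - 1)) gchoose (n - \<nu>))) * y ^ \<nu>)"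
        by (simp only: of_real_mult mult.assoc)
    qed
    have S2: "(\<Sum>\<nu>=0..Suc m. complex_of_real (((real (Suc m) - \<alpha>) gchoose (Suc m-\<nu>)) * ((real n + \<alpha>) gchoose \<nu>)) * (of_nat \<nu> * y^(\<nu>-1)))
        = complex_of_real (real n + \<alpha>) * p_poly m n (\<alpha> - 1) y"
    proof -
      have "(\<Sum>\<mu>=0..m. complex_of_real (((real (Suc m) - \<alpha>) gchoose (Suc m - Suc \<mu>)) * ((real n + \<alpha>) gchoose Suc \<mu>)) * (of_nat (Suc \<mu>) * y ^ (Suc \<mu> - 1)))
         = (\<Sum>\<mu>=0..m. complex_of_real (real n + \<alpha>) * (complex_of_real (((real m - (\<alpha> - 1)) gchoose (m - \<mu>)) * ((real n + (\<alpha> - 1)) gchoose \<mu>)) * y ^ \<mu>))"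
      proof (rule sum.cong[OF refl])
        fix \<mu> assume "\<mu> \<in> {0..m}"
        have "((real (Suc m) - \<alpha>) gchoose (Suc m - Suc \<mu>)) * ((real n + \<alpha>) gchoose Suc \<mu>) * real (Suc \<mu>)
            = (real n + \<alpha>) * (((real m - (\<alpha> - 1)) gchoose (m - \<mu>)) * ((real n + (\<alpha> - 1)) gchoose \<mu>))"
        proof -
          let ?C1 = "(real (Suc m) - \<alpha>) gchoose (m - \<mu>)"
          have "?C1 * ((real n + \<alpha>) gchoose Suc \<mu>) * real (Suc \<mu>) = ?C1 * (real (Suc \<mu>) * ((real n + \<alpha>) gchoose Suc \<mu>))"
            by (simp only: ac_simps)
          also have "\<dots> = ?C1 * ((real n + \<alpha>) * ((real n + \<alpha> - 1) gchoose \<mu>))"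
            by (simp only: G1)
          also have "\<dots> = (real n + \<alpha>) * (?C1 * ((real n + \<alpha> - 1) gchoose \<mu>))"
            by (simp only: ac_simps)
          finally show ?thesis unfolding e1 e2 diff_Suc_Suc .
        qed
        then have "complex_of_real (((real (Suc m) - \<alpha>) gchoose (Suc m - Suc \<mu>)) * ((real n + \<alpha>) gchoose Suc \<mu>)) * of_nat (Suc \<mu>)
            = complex_of_real (real n + \<alpha>) * complex_of_real (((real m - (\<alpha> - 1)) gchoose (m - \<mu>)) * ((real n + (\<alpha> - 1)) gchoose \<mu>))"
          by (metis of_real_mult of_real_of_nat_eq)
        then show "complex_of_real (((real (Suc m) - \<alpha>) gchoose (Suc m - Suc \<mu>)) * ((real n + \<alpha>) gchoose Suc \<mu>)) * (of_nat (Suc \<mu>) * y ^ (Suc \<mu> - 1))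
         = complex_of_real (real n + \<alpha>) * (complex_of_real (((real m - (\<alpha> - 1)) gchoose (m - \<mu>)) * ((real n + (\<alpha> - 1)) gchoose \<mu>)) * y ^ \<mu>)"
          by (simp only: diff_Suc_1 mult.assoc[symmetric])
      qed
      note A = this
      have "(\<Sum>\<nu>=0..Suc m. complex_of_real (((real (Suc m) - \<alpha>) gchoose (Suc m-\<nu>)) * ((real n + \<alpha>) gchoose \<nu>)) * (of_nat \<nu> * y^(\<nu>-1)))
        = complex_of_real (((real (Suc m) - \<alpha>) gchoose (Suc m - 0)) * ((real n + \<alpha>) gchoose 0)) * (of_nat 0 * y ^ (0 - 1)) +
         (\<Sum>\<mu>=0..m. complex_of_real (((real (Suc m) - \<alpha>) gchoose (Suc m - Suc \<mu>)) * ((real n + \<alpha>) gchoose Suc \<mu>)) * (of_nat (Suc \<mu>) * y ^ (Suc \<mu> - 1)))"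
        unfolding sum.atLeast0_atMost_Suc_shift by (simp only: comp_def)
      also have "\<dots> = (\<Sum>\<mu>=0..m. complex_of_real (((real (Suc m) - \<alpha>) gchoose (Suc m - Suc \<mu>)) * ((real n + \<alpha>) gchoose Suc \<mu>)) * (of_nat (Suc \<mu>) * y ^ (Suc \<mu> - 1)))"
        by (simp only: of_nat_0 mult_zero_left mult_zero_right add_0_left)
      also have "\<dots> = complex_of_real (real n + \<alpha>) * p_poly m n (\<alpha> - 1) y"
        unfolding A p_poly_def sum_distrib_left ..
      finally show ?thesis .
    qed
    have IH: "y powr (complex_of_real (\<alpha> - 1)) * q_poly m n (\<alpha> - 1) y - p_poly m n (\<alpha> - 1) y = complex_of_real ?K' * Ig m n ?\<beta> y"
      using Suc.IH[OF y, of "\<alpha> - 1"] unfolding eb .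
    have "(?F has_field_derivative
        (y powr (complex_of_real \<alpha> - 1) * (complex_of_real (real n + \<alpha>) * q_poly m n (\<alpha> - 1) y) - complex_of_real (real n + \<alpha>) * p_poly m n (\<alpha> - 1) y)
         - complex_of_real ?K * (- of_nat (Suc m) * Ig m n ?\<beta> y)) (at y)"
      using DERIV_diff[OF dL[OF y, of \<alpha> "Suc m" n] DERIV_cmult[OF dIg[OF y], of "complex_of_real ?K"]]
      unfolding S1 S2 .
    then show "(?F has_field_derivative 0) (at y)"
    proof (rule DERIV_cong)
      have "y powr (complex_of_real \<alpha> - 1) * (complex_of_real (real n + \<alpha>) * q_poly m n (\<alpha> - 1) y) - complex_of_real (real n + \<alpha>) * p_poly m n (\<alpha> - 1) y
          = complex_of_real (real n + \<alpha>) * (y powr (complex_of_real (\<alpha> - 1)) * q_poly m n (\<alpha> - 1) y - p_poly m n (\<alpha> - 1) y)"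
        by (simp add: algebra_simps)
      also have "\<dots> = complex_of_real ((real n + \<alpha>) * ?K') * Ig m n ?\<beta> y"
        unfolding IH by (simp only: of_real_mult mult.assoc)
      also have "\<dots> = complex_of_real (- real (Suc m) * ?K) * Ig m n ?\<beta> y"
        unfolding KK ..
      finally show "(y powr (complex_of_real \<alpha> - 1) * (complex_of_real (real n + \<alpha>) * q_poly m n (\<alpha> - 1) y) - complex_of_real (real n + \<alpha>) * p_poly m n (\<alpha> - 1) y)
         - complex_of_real ?K * (- of_nat (Suc m) * Ig m n ?\<beta> y) = 0"
        by (simp add: algebra_simps)
    qed
  next
    show "?F 1 = 0" using vdm[of "Suc m" n \<alpha>] by (simp add: Ig_def)
  qed
  then show ?case by simp
qed


theorem lemma2p2:
  fixes m n :: nat and \<alpha> :: real and x :: complex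
  assumes "m > 0" and "n > 0"
    and "0 \<notin> closed_segment 1 x"
  shows "x powr (complex_of_real \<alpha>) * q_poly m n \<alpha> x - p_poly m n \<alpha> x =
    complex_of_real (\<alpha> * ((real m - \<alpha>) gchoose m) * ((real n + \<alpha>) gchoose n)) *
    contour_integral (linepath 1 x)
      (\<lambda>t. (t - x) ^ m * (1 - t) ^ n * t powr (complex_of_real \<alpha> - of_nat m - 1))"
proof -
  have "x \<in> SS" using assms(3) seg_iff unfolding SS_def by auto
  from main[OF this, of \<alpha> m n] show ?thesis unfolding Ig_def .
qed

end
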